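(* Let $N\ge 1$, $\sigma\in(0,1)$, $c>0$ and $q\in(1-\sigma,1)$. Then the client-server mechanism with parameters $(\sigma,c,q)$ is $\epsilon$-differentially private with $\epsilon=\frac{q}{c(q+\sigma-1)}$. That is, for every $\delta\ge 0$, every pair of $\delta$-adjacent initial states $\theta(0),\theta'(0)\in\mathbb{R}^N$, and every measurable set $\mathit{Obs}$ of observation sequences, $$\Pr\big[(x(t),y(t))_{t\ge0}\in \mathit{Obs}\mid \theta(0)\big]\le e^{\epsilon\delta}\,\Pr\big[(x(t),y(t))_{t\ge0}\in \mathit{Obs}\mid \theta'(0)\big].$$
   Context: $Lap(b)$ denotes the Laplace distribution on $\mathbb{R}$ with density $p_L(x\mid b)=\frac{1}{2b}e^{-|x|/b}$. Client-server mechanism with parameters $\sigma\in(0,1)$, $c>0$, $q\in(0,1)$: there are $N$ clients with real initial states $\theta_1(0),\dots,\theta_N(0)$ and one server. At each round $t=0,1,2,\dots$: (i) each client $i$ sends $x_i(t)=\theta_i(t)+\eta_i(t)$ to the server, where the $\eta_i(t)$ ($i\in[N]$, $t\ge0$) are mutually independent with $\eta_i(t)\sim Lap(cq^t)$; (ii) the server sets its state $y(t)=\frac1N\sum_{i=1}^N x_i(t)$; (iii) the server sends $y(t)$ to all clients; (iv) each client updates $\theta_i(t+1)=(1-\sigma)\theta_i(t)+\sigma y(t)$. The adversary observes the sequence $(x(t),y(t))_{t\ge0}$ (all messages and the server's state). Two vectors $\theta,\theta'\in\mathbb{R}^N$ are $\delta$-adjacent ($\delta\ge0$) if there is one index $i$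 with $|\theta_i-\theta'_i|\le\delta$ and $\theta_j=\theta'_j$ for all $j\ne i$. *)

theory Defs
  imports "HOL-Probability.Probability"
begin

definition laplace :: "real \<Rightarrow> real measure" where
  "laplace b = density lborel (\<lambda>x. ennreal (exp (- \<bar>x\<bar> / b) / (2 * b)))"

definition noise_space :: "nat \<Rightarrow> real \<Rightarrow> real \<Rightarrow> (nat \<Rightarrow> nat \<Rightarrow> real) measure" where
  "noise_space N c q = (\<Pi>\<^sub>M t\<in>UNIV. \<Pi>\<^sub>M i\<in>{..<N}. laplace (c * q ^ t))"

fun cs_state :: "nat \<Rightarrow> real \<Rightarrow> (nat \<Rightarrow> real) \<Rightarrow> (nat \<Rightarrow> nat \<Rightarrow> real) \<Rightarrow> nat \<Rightarrow> nat \<Rightarrow> real"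
  and cs_server :: "nat \<Rightarrow> real \<Rightarrow> (nat \<Rightarrow> real) \<Rightarrow> (nat \<Rightarrow> nat \<Rightarrow> real) \<Rightarrow> nat \<Rightarrow> real" where
  "cs_state N \<sigma> \<theta>0 \<eta> 0 = \<theta>0"
| "cs_state N \<sigma> \<theta>0 \<eta> (Suc t) =
     (\<lambda>i. (1 - \<sigma>) * cs_state N \<sigma> \<theta>0 \<eta> t i + \<sigma> * cs_server N \<sigma> \<theta>0 \<eta> t)"
| "cs_server N \<sigma> \<theta>0 \<eta> t =
     (\<Sum>i<N. cs_state N \<sigma> \<theta>0 \<eta> t i + \<eta> t i) / real N"

text \<open>Observation of the adversary: the messages x(t) (restricted to the N clients)
  and the server state y(t), for all rounds t.\<close>
definition cs_obs :: "nat \<Rightarrow> real \<Rightarrow> (nat \<Rightarrow> real) \<Rightarrow> (nat \<Rightarrow> nat \<Rightarrow> real) \<Rightarrow> nat \<Rightarrow> (nat \<Rightarrow> real) \<times> real" where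
  "cs_obs N \<sigma> \<theta>0 \<eta> = (\<lambda>t. ((\<lambda>i\<in>{..<N}. cs_state N \<sigma> \<theta>0 \<eta> t i + \<eta> t i),
                             cs_server N \<sigma> \<theta>0 \<eta> t))"

definition obs_space :: "nat \<Rightarrow> (nat \<Rightarrow> (nat \<Rightarrow> real) \<times> real) measure" where
  "obs_space N = (\<Pi>\<^sub>M t\<in>UNIV. (\<Pi>\<^sub>M i\<in>{..<N}. lborel) \<Otimes>\<^sub>M lborel)"

definition adjacent :: "nat \<Rightarrow> real \<Rightarrow> (nat \<Rightarrow> real) \<Rightarrow> (nat \<Rightarrow> real) \<Rightarrow> bool" where
  "adjacent N \<delta> \<theta> \<theta>' \<longleftrightarrow>
     (\<exists>i<N. \<bar>\<theta> i - \<theta>' i\<bar> \<le> \<delta> \<and> (\<forall>j<N. j \<noteq> i \<longrightarrow> \<theta> j = \<theta>' j))"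

end

theory Submission
  imports Defs
begin

definition domin :: "'a measure \<Rightarrow> 'a measure \<Rightarrow> ennreal \<Rightarrow> bool" where
  "domin N M K \<longleftrightarrow> sets N = sets M \<and> (\<forall>A\<in>sets M. emeasure N A \<le> K * emeasure M A)"

lemma domin_nn_integral:
  assumes d: "domin N M K" and f: "f \<in> borel_measurable M"
  shows "(\<integral>\<^sup>+x. f x \<partial>N) \<le> K * (\<integral>\<^sup>+x. f x \<partial>M)"
  using f
proof (induct rule: borel_measurable_induct)
  case (cong f g)
  have "space N = space M" using d unfolding domin_def using sets_eq_imp_space_eq by blast
  then have "(\<integral>\<^sup>+x. f x \<partial>N) = (\<integral>\<^sup>+x. g x \<partial>N)" "(\<integral>\<^sup>+x. f x \<partial>M) = (\<integral>\<^sup>+x. g x \<partial>M)"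
    using cong(3) by (auto intro!: nn_integral_cong)
  then show ?case using cong(4) by simp
next
  case (set A)
  have sN: "A \<in> sets N" using d set unfolding domin_def by simp
  have "\<forall>A\<in>sets M. emeasure N A \<le> K * emeasure M A" using d unfolding domin_def by (rule conjunct2)
  then have "emeasure N A \<le> K * emeasure M A" using set by (rule bspec)
  moreover have "integral\<^sup>N N (indicator A) = emeasure N A" using sN by (rule nn_integral_indicator)
  moreover have "integral\<^sup>N M (indicator A) = emeasure M A" using set by (rule nn_integral_indicator)
  ultimately show ?case by (simp only:)
next
  case (mult u c)
  have mN: "u \<in> borel_measurable N" using mult(2) d unfolding domin_def using measurable_cong_sets by blast
  have "(\<integral>\<^sup>+x. c * u x \<partial>N) = c * (\<integral>\<^sup>+x. u x \<partial>N)" using mN by (simp add: nn_integral_cmult)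
  also have "\<dots> \<le> c * (K * (\<integral>\<^sup>+x. u x \<partial>M))" using mult by (intro mult_left_mono) auto
  also have "\<dots> = K * (c * (\<integral>\<^sup>+x. u x \<partial>M))" by (simp add: ac_simps)
  also have "\<dots> = K * (\<integral>\<^sup>+x. c * u x \<partial>M)" using mult by (simp add: nn_integral_cmult)
  finally show ?case .
next
  case (add u v)
  have mN: "u \<in> borel_measurable N" "v \<in> borel_measurable N"
    using add(1,4) d unfolding domin_def using measurable_cong_sets by blast+
  have "(\<integral>\<^sup>+x. v x + u x \<partial>N) = (\<integral>\<^sup>+x. v x \<partial>N) + (\<integral>\<^sup>+x. u x \<partial>N)" using mN by (simp add: nn_integral_add)
  also have "\<dots> \<le> K * (\<integral>\<^sup>+x. v x \<partial>M) + K * (\<integral>\<^sup>+x. u x \<partial>M)" using add by (intro add_mono) auto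
  also have "\<dots> = K * (\<integral>\<^sup>+x. v x + u x \<partial>M)" using add by (simp add: nn_integral_add distrib_left)
  finally show ?case .
next
  case (seq U)
  have mN: "\<And>i. U i \<in> borel_measurable N" using seq(1) d unfolding domin_def using measurable_cong_sets by blast
  have "(\<integral>\<^sup>+x. (SUP i. U i) x \<partial>N) = (SUP i. \<integral>\<^sup>+x. U i x \<partial>N)"
    unfolding SUP_apply by (rule nn_integral_monotone_convergence_SUP[OF seq(4) mN])
  also have "\<dots> \<le> (SUP i. K * \<integral>\<^sup>+x. U i x \<partial>M)" using seq(3) by (intro SUP_mono) auto
  also have "\<dots> = K * (SUP i. \<integral>\<^sup>+x. U i x \<partial>M)" by (simp add: SUP_mult_left_ennreal)
  also have "\<dots> = K * (\<integral>\<^sup>+x. (SUP i. U i) x \<partial>M)"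
    unfolding SUP_apply by (rule nn_integral_monotone_convergence_SUP[OF seq(4) seq(1), symmetric, THEN arg_cong[where f="\<lambda>z. K * z"]])
  finally show ?case .
qed
lemma domin_pair:
  assumes d1: "domin N1 M1 C1" and d2: "domin N2 M2 C2"
    and f1: "finite_measure M2" and f2: "finite_measure N2"
  shows "domin (N1 \<Otimes>\<^sub>M N2) (M1 \<Otimes>\<^sub>M M2) (C1 * C2)"
proof -
  have s1: "sets N1 = sets M1" and s2: "sets N2 = sets M2" using d1 d2 unfolding domin_def by auto
  interpret M2: finite_measure M2 by (rule f1)
  interpret N2: finite_measure N2 by (rule f2)
  have ss: "sets (N1 \<Otimes>\<^sub>M N2) = sets (M1 \<Otimes>\<^sub>M M2)" by (rule sets_pair_measure_cong[OF s1 s2])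
  have "emeasure (N1 \<Otimes>\<^sub>M N2) A \<le> C1 * C2 * emeasure (M1 \<Otimes>\<^sub>M M2) A" if A: "A \<in> sets (M1 \<Otimes>\<^sub>M M2)" for A
  proof -
    have AN: "A \<in> sets (N1 \<Otimes>\<^sub>M N2)" using A ss by blast
    have "emeasure (N1 \<Otimes>\<^sub>M N2) A = (\<integral>\<^sup>+x. emeasure N2 (Pair x -` A) \<partial>N1)"
      by (rule N2.emeasure_pair_measure_alt[OF AN])
    also have "\<dots> \<le> (\<integral>\<^sup>+x. C2 * emeasure M2 (Pair x -` A) \<partial>N1)"
    proof (rule nn_integral_mono)
      fix x have "Pair x -` A \<in> sets M2" by (rule sets_Pair1[OF A])
      then show "emeasure N2 (Pair x -` A) \<le> C2 * emeasure M2 (Pair x -` A)"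
        using d2 unfolding domin_def by blast
    qed
    also have "\<dots> \<le> C1 * (\<integral>\<^sup>+x. C2 * emeasure M2 (Pair x -` A) \<partial>M1)"
      using M2.measurable_emeasure_Pair[OF A] by (intro domin_nn_integral[OF d1]) auto
    also have "\<dots> = C1 * (C2 * emeasure (M1 \<Otimes>\<^sub>M M2) A)"
      using M2.measurable_emeasure_Pair[OF A] by (simp add: nn_integral_cmult M2.emeasure_pair_measure_alt[OF A])
    finally show ?thesis by (simp add: ac_simps)
  qed
  then show ?thesis using ss unfolding domin_def by blast
qed

lemma domin_distr:
  assumes d: "domin N M K" and st: "sets T' = sets T" and g: "g \<in> measurable M T"
  shows "domin (distr N T' g) (distr M T g) K"
proof -
  have sN: "sets N = sets M" using d unfolding domin_def by auto
  have gN: "g \<in> measurable N T'" using g sN st measurable_cong_sets by blast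
  have spN: "space N = space M" using sN sets_eq_imp_space_eq by blast
  have "emeasure (distr N T' g) A \<le> K * emeasure (distr M T g) A" if A: "A \<in> sets (distr M T g)" for A
  proof -
    have A': "A \<in> sets T'" "A \<in> sets T" using A st by auto
    have "emeasure (distr N T' g) A = emeasure N (g -` A \<inter> space N)"
      using A' gN by (intro emeasure_distr) auto
    also have "\<dots> = emeasure N (g -` A \<inter> space M)" using spN by simp
    also have "\<dots> \<le> K * emeasure M (g -` A \<inter> space M)"
      using d measurable_sets[OF g A'(2)] unfolding domin_def by blast
    also have "emeasure M (g -` A \<inter> space M) = emeasure (distr M T g) A"
      using A' g by (intro emeasure_distr[symmetric]) auto
    finally show ?thesis by simp
  qed
  moreover have "sets (distr N T' g) = sets (distr M T g)" using st by simp
  ultimately show ?thesis unfolding domin_def by blast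
qed

lemma domin_refl: "domin M M 1"
  unfolding domin_def by simp

lemma domin_PiM_finite:
  fixes J :: "'i set" and M N :: "'i \<Rightarrow> 'a measure"
  assumes "finite J"
  shows "(\<forall>i\<in>J. prob_space (M i) \<and> prob_space (N i) \<and> domin (N i) (M i) (C i)) \<longrightarrow>
    domin (PiM J N) (PiM J M) (\<Prod>i\<in>J. C i)"
  using assms
proof (induction J rule: finite_induct)
  case empty
  show ?case using domin_refl[of "PiM {} M"] by (simp add: PiM_empty)
next
  case (insert i J)
  show ?case
  proof
    assume H: "\<forall>j\<in>insert i J. prob_space (M j) \<and> prob_space (N j) \<and> domin (N j) (M j) (C j)"
    then have IH: "domin (PiM J N) (PiM J M) (\<Prod>i\<in>J. C i)" using insert.IH by blast
    have pM: "\<And>j. j \<in> insert i J \<Longrightarrow> prob_space (M j)" and pN: "\<And>j. j \<in> insert i J \<Longrightarrow> prob_space (N j)"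
      and dj: "domin (N i) (M i) (C i)" using H by auto
    have fM: "finite_measure (PiM J M)"
      using prob_space_PiM[of J M] pM by (auto intro: prob_space.axioms(1))
    have fN: "finite_measure (PiM J N)"
      using prob_space_PiM[of J N] pN by (auto intro: prob_space.axioms(1))
    have dp: "domin (N i \<Otimes>\<^sub>M PiM J N) (M i \<Otimes>\<^sub>M PiM J M) (C i * (\<Prod>i\<in>J. C i))"
      by (rule domin_pair[OF dj IH fM fN])
    have st: "sets (PiM (insert i J) N) = sets (PiM (insert i J) M)"
      using dj H unfolding domin_def by (intro sets_PiM_cong) auto
    have g: "(\<lambda>(x, X). X(i := x)) \<in> measurable (M i \<Otimes>\<^sub>M PiM J M) (PiM (insert i J) M)"
      by measurable
    have "domin (distr (N i \<Otimes>\<^sub>M PiM J N) (PiM (insert i J) N) (\<lambda>(x, X). X(i := x)))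
       (distr (M i \<Otimes>\<^sub>M PiM J M) (PiM (insert i J) M) (\<lambda>(x, X). X(i := x))) (C i * (\<Prod>i\<in>J. C i))"
      by (rule domin_distr[OF dp st g])
    also have "distr (N i \<Otimes>\<^sub>M PiM J N) (PiM (insert i J) N) (\<lambda>(x, X). X(i := x)) = PiM (insert i J) N"
      using pN by (intro distr_pair_PiM_eq_PiM) auto
    also have "distr (M i \<Otimes>\<^sub>M PiM J M) (PiM (insert i J) M) (\<lambda>(x, X). X(i := x)) = PiM (insert i J) M"
      using pM by (intro distr_pair_PiM_eq_PiM) auto
    finally show "domin (PiM (insert i J) N) (PiM (insert i J) M) (\<Prod>i\<in>insert i J. C i)"
      using insert.hyps by simp
  qed
qed

lemma domin_generator:
  assumes alg: "algebra \<Omega> G" and sp: "space M = \<Omega>" and sM: "sets M = sigma_sets \<Omega> G"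
    and sN: "sets N = sets M" and finM: "finite_measure M" and K: "K < top"
    and gen: "\<And>A. A \<in> G \<Longrightarrow> emeasure N A \<le> K * emeasure M A"
  shows "domin N M K"
proof -
  interpret algebra \<Omega> G by (rule alg)
  interpret finite_measure M by (rule finM)
  define f where "f = (\<lambda>B. K * emeasure M B)"
  have GM: "G \<subseteq> sets M" using sM sigma_sets.Basic by blast
  have pos: "positive G f" unfolding positive_def f_def by simp
  have ca: "countably_additive G f"
    unfolding countably_additive_def
  proof (intro allI impI)
    fix A :: "nat \<Rightarrow> _" assume A: "range A \<subseteq> G" "disjoint_family A" "\<Union> (range A) \<in> G"
    have "range A \<subseteq> sets M" using A GM by blast
    then have "(\<Sum>i. emeasure M (A i)) = emeasure M (\<Union>i. A i)" using A(2) by (rule suminf_emeasure)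
    then show "(\<Sum>i. f (A i)) = f (\<Union> (range A))" unfolding f_def by simp
  qed
  have add: "additive G f" by (rule countably_additive_additive[OF pos ca])
  have inc: "increasing G f" by (rule additive_increasing[OF pos add])
  define Om where "Om = outer_measure G f"
  define ls where "ls = lambda_system \<Omega> (Pow \<Omega>) Om"
  have mls: "measure_space \<Omega> ls Om"
    unfolding ls_def Om_def
    by (rule sigma_algebra.caratheodory_lemma[OF sigma_algebra_Pow outer_measure_space_outer_measure[OF pos inc]])
  then have sls: "sigma_algebra \<Omega> ls" by (simp add: measure_space_def)
  have "G \<subseteq> ls" unfolding ls_def Om_def by (rule algebra_subset_lambda_system[OF pos inc add])
  then have Gls: "sigma_sets \<Omega> G \<subseteq> ls" by (rule sigma_algebra.sigma_sets_subset[OF sls])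
  have OO: "Om \<Omega> = f \<Omega>" unfolding Om_def by (rule outer_measure_agrees[OF pos ca top])
  have low: "f B \<le> Om B" if B: "B \<in> sets M" for B
    unfolding Om_def outer_measure_def
  proof (rule INF_greatest, clarify)
    fix C :: "nat \<Rightarrow> _" assume C: "range C \<subseteq> G" "disjoint_family C" "B \<subseteq> (\<Union>i. C i)"
    have CM: "range C \<subseteq> sets M" using C GM by blast
    have "emeasure M B \<le> emeasure M (\<Union>i. C i)" using C(3) CM by (intro emeasure_mono) auto
    also have "\<dots> = (\<Sum>i. emeasure M (C i))" using CM C(2) by (rule suminf_emeasure[symmetric])
    finally show "f B \<le> (\<Sum>i. f (C i))" unfolding f_def by (simp add: mult_left_mono)
  qed
  have upN: "emeasure N B \<le> Om B" if B: "B \<in> sets M" for B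
    unfolding Om_def outer_measure_def
  proof (rule INF_greatest, clarify)
    fix C :: "nat \<Rightarrow> _" assume C: "range C \<subseteq> G" "disjoint_family C" "B \<subseteq> (\<Union>i. C i)"
    have CM: "range C \<subseteq> sets N" using C GM sN by blast
    have "emeasure N B \<le> emeasure N (\<Union>i. C i)" using C(3) CM by (intro emeasure_mono) auto
    also have "\<dots> = (\<Sum>i. emeasure N (C i))" using CM C(2) by (rule suminf_emeasure[symmetric])
    also have "\<dots> \<le> (\<Sum>i. f (C i))" unfolding f_def using C(1) by (intro suminf_le gen) auto
    finally show "emeasure N B \<le> (\<Sum>i. f (C i))" .
  qed
  have main: "emeasure N A \<le> K * emeasure M A" if A: "A \<in> sets M" for A
  proof -
    have Als: "A \<in> ls" using A sM Gls by blast
    have AO: "A \<subseteq> \<Omega>" using A sets.sets_into_space sp by blast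
    have "Om (A \<inter> \<Omega>) + Om ((\<Omega> - A) \<inter> \<Omega>) = Om \<Omega>"
      using Als unfolding ls_def lambda_system_def by blast
    then have eq: "Om A + Om (\<Omega> - A) = f \<Omega>" using AO OO by (simp add: Int_absorb2 Int_absorb1)
    have cA: "\<Omega> - A \<in> sets M" using A sp by (metis sets.compl_sets)
    have fadd: "f \<Omega> = f A + f (\<Omega> - A)"
    proof -
      have "emeasure M A + emeasure M (\<Omega> - A) = emeasure M (A \<union> (\<Omega> - A))"
        using A cA by (intro plus_emeasure) auto
      also have "A \<union> (\<Omega> - A) = \<Omega>" using AO by blast
      finally show ?thesis unfolding f_def by (metis distrib_left)
    qed
    have fin: "f \<Omega> < top" unfolding f_def using K sp emeasure_real[of \<Omega>] by (auto simp add: ennreal_mult_less_top)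
    have le1: "Om (\<Omega> - A) + Om A \<le> Om (\<Omega> - A) + f A"
    proof -
      have "Om (\<Omega> - A) + Om A = f A + f (\<Omega> - A)" using eq fadd by (simp add: add.commute)
      also have "\<dots> \<le> f A + Om (\<Omega> - A)" using low[OF cA] by (rule add_left_mono)
      finally show ?thesis by (simp add: add.commute)
    qed
    have "Om (\<Omega> - A) \<le> Om A + Om (\<Omega> - A)" by simp
    also have "\<dots> < top" using eq fin by simp
    finally have ntop: "Om (\<Omega> - A) \<noteq> top" by simp
    have "Om (\<Omega> - A) = \<infinity> \<or> Om A \<le> f A" by (rule iffD1[OF ennreal_add_left_cancel_le le1])
    then have "Om A \<le> f A" using ntop by auto
    then show ?thesis using upN[OF A] unfolding f_def by simp
  qed
  show ?thesis unfolding domin_def using sN main by blast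
qed

lemma (in product_prob_space) measurable_compose_PiM:
  assumes f: "\<And>i. i \<in> I \<Longrightarrow> f i \<in> measurable (M i) (M i)"
  shows "(\<lambda>x. \<lambda>i\<in>I. f i (x i)) \<in> measurable (PiM I M) (PiM I M)"
proof (rule measurable_restrict)
  fix i assume i: "i \<in> I"
  show "(\<lambda>x. f i (x i)) \<in> measurable (PiM I M) (M i)"
    using measurable_compose[OF measurable_component_singleton[OF i, of M] f[OF i]] by simp
qed

lemma (in product_prob_space) distr_PiM_compose:
  assumes f: "\<And>i. i \<in> I \<Longrightarrow> f i \<in> measurable (M i) (M i)"
  shows "distr (PiM I M) (PiM I M) (\<lambda>x. \<lambda>i\<in>I. f i (x i)) = PiM I (\<lambda>i. distr (M i) (M i) (f i))"
proof -
  define N where "N = (\<lambda>i. if i \<in> I then distr (M i) (M i) (f i) else M i)"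
  interpret N: product_prob_space N I
    unfolding product_prob_space_def product_sigma_finite_def product_prob_space_axioms_def
    by (auto simp: N_def M.prob_space_axioms intro!: prob_space_imp_sigma_finite M.prob_space_distr f)
  have sN: "\<And>i. sets (N i) = sets (M i)" by (simp add: N_def)
  have spN: "\<And>i. space (N i) = space (M i)" by (simp add: N_def)
  have S: "(\<lambda>x. \<lambda>i\<in>I. f i (x i)) \<in> measurable (PiM I M) (PiM I M)" by (rule measurable_compose_PiM[OF f])
  have "distr (PiM I M) (PiM I M) (\<lambda>x. \<lambda>i\<in>I. f i (x i)) = PiM I N"
  proof (rule N.PiM_eq)
    show "sets (distr (PiM I M) (PiM I M) (\<lambda>x. \<lambda>i\<in>I. f i (x i))) = sets (PiM I N)"
      unfolding sets_distr by (rule sets_PiM_cong[OF refl sN[symmetric]])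
    fix J F assume J: "finite J" "J \<subseteq> I" and F: "\<And>j. j \<in> J \<Longrightarrow> F j \<in> sets (N j)"
    have FM: "\<And>j. j \<in> J \<Longrightarrow> F j \<in> sets (M j)" using F sN by blast
    have eqe: "prod_emb I N J (Pi\<^sub>E J F) = prod_emb I M J (Pi\<^sub>E J F)"
      unfolding prod_emb_def spN by (rule refl)
    have inS: "prod_emb I M J (Pi\<^sub>E J F) \<in> sets (PiM I M)"
      using J FM by (intro measurable_prod_emb sets_PiM_I_finite) auto
    have pre: "(\<lambda>x. \<lambda>i\<in>I. f i (x i)) -` prod_emb I M J (Pi\<^sub>E J F) \<inter> space (PiM I M) =
        prod_emb I M J (Pi\<^sub>E J (\<lambda>j. f j -` F j \<inter> space (M j)))"
      using J f[THEN measurable_space]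
      by (auto simp: prod_emb_def space_PiM PiE_iff subset_eq)
    have "emeasure (distr (PiM I M) (PiM I M) (\<lambda>x. \<lambda>i\<in>I. f i (x i))) (prod_emb I N J (Pi\<^sub>E J F))
        = emeasure (PiM I M) (prod_emb I M J (Pi\<^sub>E J (\<lambda>j. f j -` F j \<inter> space (M j))))"
      unfolding eqe using inS S by (simp add: emeasure_distr pre)
    also have "\<dots> = (\<Prod>j\<in>J. emeasure (M j) (f j -` F j \<inter> space (M j)))"
      using J FM f by (intro emeasure_PiM_emb) (auto intro: measurable_sets)
    also have "\<dots> = (\<Prod>j\<in>J. emeasure (N j) (F j))"
      using J FM f by (intro prod.cong) (auto simp: N_def emeasure_distr)
    finally show "emeasure (distr (PiM I M) (PiM I M) (\<lambda>x. \<lambda>i\<in>I. f i (x i))) (prod_emb I N J (Pi\<^sub>E J F))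
        = (\<Prod>j\<in>J. emeasure (N j) (F j))" .
  qed
  also have "PiM I N = PiM I (\<lambda>i. distr (M i) (M i) (f i))"
    by (intro PiM_cong) (auto simp: N_def)
  finally show ?thesis .
qed

lemma (in product_prob_space) domin_PiM_inf:
  assumes pN: "\<And>i. prob_space (N i)" and d: "\<And>i. i \<in> I \<Longrightarrow> domin (N i) (M i) (C i)"
    and bound: "\<And>J. finite J \<Longrightarrow> J \<subseteq> I \<Longrightarrow> (\<Prod>i\<in>J. C i) \<le> K" and K: "K < top"
  shows "domin (PiM I N) (PiM I M) K"
proof (rule domin_generator[OF algebra_generator refl sets_PiM_generator _ _ K])
  interpret N: product_prob_space N I
    unfolding product_prob_space_def product_sigma_finite_def product_prob_space_axioms_def
    by (auto intro!: prob_space_imp_sigma_finite pN)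
  have sN: "\<And>i. i \<in> I \<Longrightarrow> sets (N i) = sets (M i)" using d unfolding domin_def by blast
  then have spN: "\<And>i. i \<in> I \<Longrightarrow> space (N i) = space (M i)" using sets_eq_imp_space_eq by blast
  show sNM: "sets (PiM I N) = sets (PiM I M)" using sN by (rule sets_PiM_cong[OF refl])
  show "finite_measure (PiM I M)" by (rule P.finite_measure_axioms)
  fix A assume "A \<in> generator"
  then obtain J X where J: "finite J" "J \<subseteq> I" and X: "X \<in> sets (PiM J M)" and A: "A = prod_emb I M J X"
    by (auto elim!: generator.cases)
  have sJ: "sets (PiM J N) = sets (PiM J M)" using sN J by (intro sets_PiM_cong) auto
  have XN: "X \<in> sets (PiM J N)" using X sJ by blast
  have eqe: "prod_emb I N J X = prod_emb I M J X"
    unfolding prod_emb_def using spN by (metis PiE_cong)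
  have dJ: "domin (PiM J N) (PiM J M) (\<Prod>i\<in>J. C i)"
    using domin_PiM_finite[OF J(1), of M N C] J(2) d pN M.prob_space_axioms by (meson subsetD)
  have "emeasure (PiM I N) A = emeasure (PiM J N) X"
    unfolding A eqe[symmetric] by (rule N.emeasure_PiM_emb'[OF J(2) J(1) XN])
  also have "\<dots> \<le> (\<Prod>i\<in>J. C i) * emeasure (PiM J M) X" using dJ X unfolding domin_def by blast
  also have "\<dots> \<le> K * emeasure (PiM J M) X" using bound[OF J] by (rule mult_right_mono) simp
  also have "emeasure (PiM J M) X = emeasure (PiM I M) A" unfolding A by (rule emeasure_PiM_emb'[OF J(2) J(1) X, symmetric])
  finally show "emeasure (PiM I N) A \<le> K * emeasure (PiM I M) A" .
qed

lemma sets_laplace[simp, measurable_cong]: "sets (laplace b) = sets borel"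
  by (simp add: laplace_def)

lemma space_laplace[simp]: "space (laplace b) = UNIV"
  by (simp add: laplace_def)

lemma laplace_dens_le:
  fixes y s b :: real
  assumes b: "b > 0"
  shows "exp (- \<bar>y - s\<bar> / b) / (2 * b) \<le> exp (\<bar>s\<bar> / b) * (exp (- \<bar>y\<bar> / b) / (2 * b))"
proof -
  have "- \<bar>y - s\<bar> \<le> \<bar>s\<bar> - \<bar>y\<bar>" using abs_triangle_ineq[of "y - s" s] by simp
  then have "- \<bar>y - s\<bar> / b \<le> (\<bar>s\<bar> - \<bar>y\<bar>) / b" using b by (intro divide_right_mono) auto
  also have "\<dots> = \<bar>s\<bar> / b + (- \<bar>y\<bar> / b)" by (simp add: diff_divide_distrib)
  finally have "- \<bar>y - s\<bar> / b \<le> \<bar>s\<bar> / b + (- \<bar>y\<bar> / b)" .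
  then have "exp (- \<bar>y - s\<bar> / b) \<le> exp (\<bar>s\<bar> / b) * exp (- \<bar>y\<bar> / b)" by (simp add: exp_add[symmetric])
  then show ?thesis using b by (simp add: divide_right_mono)
qed

lemma laplace_shift_domin:
  assumes b: "b > 0"
  shows "domin (distr (laplace b) (laplace b) (\<lambda>x. x + s)) (laplace b) (ennreal (exp (\<bar>s\<bar> / b)))"
proof -
  define p where "p = (\<lambda>x::real. ennreal (exp (- \<bar>x\<bar> / b) / (2 * b)))"
  have Ld: "laplace b = density lborel p" unfolding laplace_def p_def ..
  have pm[measurable]: "p \<in> borel_measurable borel" unfolding p_def by measurable
  have "emeasure (distr (laplace b) (laplace b) (\<lambda>x. x + s)) A \<le> ennreal (exp (\<bar>s\<bar> / b)) * emeasure (laplace b) A"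
    if A: "A \<in> sets borel" for A
  proof -
    have Am[measurable]: "A \<in> sets borel" by (rule A)
    have mf: "(\<lambda>x::real. x + s) \<in> borel_measurable borel" by measurable
    have pre: "(\<lambda>x. x + s) -` A \<in> sets borel"
      using measurable_sets[OF mf Am] by (metis Int_UNIV_right space_borel)
    have "emeasure (distr (laplace b) (laplace b) (\<lambda>x. x + s)) A = emeasure (laplace b) ((\<lambda>x. x + s) -` A)"
      by (subst emeasure_distr) auto
    also have "\<dots> = (\<integral>\<^sup>+x. p x * indicator A (x + s) \<partial>lborel)"
      unfolding Ld using pre by (subst emeasure_density) (auto intro!: nn_integral_cong simp: indicator_def)
    also have "\<dots> = (\<integral>\<^sup>+y. p (y - s) * indicator A y \<partial>lborel)"
      by (subst nn_integral_real_affine[where c=1 and t=s]) (auto simp: add.commute)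
    also have "\<dots> \<le> (\<integral>\<^sup>+y. ennreal (exp (\<bar>s\<bar> / b)) * (p y * indicator A y) \<partial>lborel)"
    proof (rule nn_integral_mono)
      fix y
      have "p (y - s) \<le> ennreal (exp (\<bar>s\<bar> / b)) * p y"
        unfolding p_def using laplace_dens_le[OF b, of y s] b
        by (simp add: ennreal_mult[symmetric] ennreal_leI)
      then show "p (y - s) * indicator A y \<le> ennreal (exp (\<bar>s\<bar> / b)) * (p y * indicator A y)"
        by (auto simp: indicator_def)
    qed
    also have "\<dots> = ennreal (exp (\<bar>s\<bar> / b)) * emeasure (laplace b) A"
      unfolding Ld by (simp add: nn_integral_cmult emeasure_density)
    finally show ?thesis .
  qed
  then show ?thesis unfolding domin_def by simp
qed

lemma prob_space_laplace:
  assumes b: "b > 0"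
  shows "prob_space (laplace b)"
proof (rule prob_spaceI)
  define e where "e = exponential_density (1 / b)"
  have em[measurable]: "e \<in> borel_measurable borel" unfolding e_def by measurable
  have e1: "(\<integral>\<^sup>+x. ennreal (e x) \<partial>lborel) = 1"
  proof -
    interpret prob_space "density lborel (exponential_density (1/b))"
      using b by (intro prob_space_exponential_density) simp
    show ?thesis using emeasure_space_1 by (simp add: e_def emeasure_density)
  qed
  have e2: "(\<integral>\<^sup>+x. ennreal (e (- x)) \<partial>lborel) = 1"
    using nn_integral_real_affine[where c="-1" and t=0 and f="\<lambda>x. ennreal (e x)"] e1 by simp
  have "2 * (\<integral>\<^sup>+x. ennreal (exp (- \<bar>x\<bar> / b) / (2 * b)) \<partial>lborel)
      = (\<integral>\<^sup>+x. ennreal (e x) + ennreal (e (- x)) \<partial>lborel)"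
  proof -
    have "2 * (\<integral>\<^sup>+x. ennreal (exp (- \<bar>x\<bar> / b) / (2 * b)) \<partial>lborel)
        = (\<integral>\<^sup>+x. 2 * ennreal (exp (- \<bar>x\<bar> / b) / (2 * b)) \<partial>lborel)"
      by (simp add: nn_integral_cmult)
    also have "\<dots> = (\<integral>\<^sup>+x. ennreal (e x) + ennreal (e (- x)) \<partial>lborel)"
    proof (intro nn_integral_cong_AE eventually_mono[OF AE_lborel_singleton[of 0]])
      fix x :: real assume x: "x \<noteq> 0"
      have "ennreal (2 * (exp (- \<bar>x\<bar> / b) / (2 * b))) = ennreal 2 * ennreal (exp (- \<bar>x\<bar> / b) / (2 * b))"
        using b by (intro ennreal_mult) auto
      then have "2 * ennreal (exp (- \<bar>x\<bar> / b) / (2 * b)) = ennreal (exp (- \<bar>x\<bar> / b) / b)"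
        by simp
      also have "\<dots> = ennreal (e x) + ennreal (e (- x))"
        using x b by (cases "x < 0") (auto simp: e_def exponential_density_def)
      finally show "2 * ennreal (exp (- \<bar>x\<bar> / b) / (2 * b)) = ennreal (e x) + ennreal (e (- x))" .
    qed
    finally show ?thesis .
  qed
  also have "\<dots> = 2" using e1 e2 by (simp add: nn_integral_add)
  finally have "2 * (\<integral>\<^sup>+x. ennreal (exp (- \<bar>x\<bar> / b) / (2 * b)) \<partial>lborel) = 2 * 1" by simp
  then have "(\<integral>\<^sup>+x. ennreal (exp (- \<bar>x\<bar> / b) / (2 * b)) \<partial>lborel) = 1"
    by (subst (asm) ennreal_mult_cancel_left) auto
  then show "emeasure (laplace b) (space (laplace b)) = 1"
    by (simp add: laplace_def emeasure_density)
qed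

lemma cs_shift:
  fixes \<theta> \<theta>' :: "nat \<Rightarrow> real" and \<eta> \<eta>' :: "nat \<Rightarrow> nat \<Rightarrow> real"
  assumes i0: "i0 < N" and th: "\<And>j. j < N \<Longrightarrow> \<theta>' j = \<theta> j - (if j = i0 then d else 0)"
    and et: "\<And>t j. j < N \<Longrightarrow> \<eta>' t j = \<eta> t j + (if j = i0 then (1 - \<sigma>) ^ t * d else 0)"
  shows "(\<forall>j<N. cs_state N \<sigma> \<theta>' \<eta>' t j = cs_state N \<sigma> \<theta> \<eta> t j - (if j = i0 then (1 - \<sigma>) ^ t * d else 0))
     \<and> cs_server N \<sigma> \<theta>' \<eta>' t = cs_server N \<sigma> \<theta> \<eta> t"
proof (induction t)
  case 0
  have st: "\<forall>j<N. cs_state N \<sigma> \<theta>' \<eta>' 0 j = cs_state N \<sigma> \<theta> \<eta> 0 j - (if j = i0 then (1 - \<sigma>) ^ 0 * d else 0)"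
    using th by simp
  have "cs_server N \<sigma> \<theta>' \<eta>' 0 = cs_server N \<sigma> \<theta> \<eta> 0"
    unfolding cs_server.simps using st et by (intro arg_cong2[where f="(/)"] sum.cong) auto
  then show ?case using st by blast
next
  case (Suc t)
  have st: "\<forall>j<N. cs_state N \<sigma> \<theta>' \<eta>' (Suc t) j = cs_state N \<sigma> \<theta> \<eta> (Suc t) j - (if j = i0 then (1 - \<sigma>) ^ Suc t * d else 0)"
  proof (intro allI impI)
    fix j assume j: "j < N"
    have a: "cs_state N \<sigma> \<theta>' \<eta>' t j = cs_state N \<sigma> \<theta> \<eta> t j - (if j = i0 then (1 - \<sigma>) ^ t * d else 0)"
      using Suc.IH j by blast
    have b: "cs_server N \<sigma> \<theta>' \<eta>' t = cs_server N \<sigma> \<theta> \<eta> t" using Suc.IH by blast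
    show "cs_state N \<sigma> \<theta>' \<eta>' (Suc t) j = cs_state N \<sigma> \<theta> \<eta> (Suc t) j - (if j = i0 then (1 - \<sigma>) ^ Suc t * d else 0)"
      by (simp only: cs_state.simps a b) (simp add: algebra_simps)
  qed
  have "cs_server N \<sigma> \<theta>' \<eta>' (Suc t) = cs_server N \<sigma> \<theta> \<eta> (Suc t)"
    unfolding cs_server.simps[of N \<sigma> \<theta>' \<eta>' "Suc t"] cs_server.simps[of N \<sigma> \<theta> \<eta> "Suc t"]
    using st et by (intro arg_cong2[where f="(/)"] sum.cong) auto
  then show ?case using st by blast
qed

lemma cs_meas:
  assumes comp: "\<And>t i. i < N \<Longrightarrow> (\<lambda>\<eta>. \<eta> t i) \<in> borel_measurable P"
  shows "(\<forall>i. (\<lambda>\<eta>. cs_state N \<sigma> \<theta>0 \<eta> t i) \<in> borel_measurable P) \<and> (\<lambda>\<eta>. cs_server N \<sigma> \<theta>0 \<eta> t) \<in> borel_measurable P"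
proof (induction t)
  case 0
  have st: "\<forall>i. (\<lambda>\<eta>. cs_state N \<sigma> \<theta>0 \<eta> 0 i) \<in> borel_measurable P" by simp
  have "(\<lambda>\<eta>. cs_server N \<sigma> \<theta>0 \<eta> 0) \<in> borel_measurable P"
    unfolding cs_server.simps using st comp
    by (intro borel_measurable_divide borel_measurable_sum borel_measurable_add) auto
  then show ?case using st by blast
next
  case (Suc t)
  have st: "\<forall>i. (\<lambda>\<eta>. cs_state N \<sigma> \<theta>0 \<eta> (Suc t) i) \<in> borel_measurable P"
  proof
    fix i
    have a: "(\<lambda>\<eta>. cs_state N \<sigma> \<theta>0 \<eta> t i) \<in> borel_measurable P" and b: "(\<lambda>\<eta>. cs_server N \<sigma> \<theta>0 \<eta> t) \<in> borel_measurable P"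
      using Suc.IH by blast+
    show "(\<lambda>\<eta>. cs_state N \<sigma> \<theta>0 \<eta> (Suc t) i) \<in> borel_measurable P"
      unfolding cs_state.simps by (intro borel_measurable_add borel_measurable_times measurable_const a b) auto
  qed
  have "(\<lambda>\<eta>. cs_server N \<sigma> \<theta>0 \<eta> (Suc t)) \<in> borel_measurable P"
    unfolding cs_server.simps[of N \<sigma> \<theta>0 _ "Suc t"] using st comp
    by (intro borel_measurable_divide borel_measurable_sum borel_measurable_add) auto
  then show ?case using st by blast
qed

theorem mainTheorem1:
  fixes N :: nat and \<sigma> c q \<delta> :: real and \<theta> \<theta>' :: "nat \<Rightarrow> real"
    and Obs :: "(nat \<Rightarrow> (nat \<Rightarrow> real) \<times> real) set"
  assumes "N \<ge> 1" and "0 < \<sigma>" and "\<sigma> < 1" and "c > 0"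
    and "1 - \<sigma> < q" and "q < 1"
    and "\<delta> \<ge> 0" and "adjacent N \<delta> \<theta> \<theta>'"
    and "Obs \<in> sets (obs_space N)"
  shows "measure (noise_space N c q) {\<eta> \<in> space (noise_space N c q). cs_obs N \<sigma> \<theta> \<eta> \<in> Obs}
    \<le> exp (q / (c * (q + \<sigma> - 1)) * \<delta>) *
      measure (noise_space N c q) {\<eta> \<in> space (noise_space N c q). cs_obs N \<sigma> \<theta>' \<eta> \<in> Obs}"
proof -
  note sig0 = assms(2) and sig1 = assms(3) and c0 = assms(4) and q1 = assms(5) and q2 = assms(6)
  obtain i0 where i0: "i0 < N" "\<bar>\<theta> i0 - \<theta>' i0\<bar> \<le> \<delta>" "\<forall>j<N. j \<noteq> i0 \<longrightarrow> \<theta> j = \<theta>' j"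
    using assms(8) unfolding adjacent_def by blast
  define d where "d = \<theta> i0 - \<theta>' i0"
  define sh where "sh = (\<lambda>t::nat. (1 - \<sigma>) ^ t * d)"
  define b where "b = (\<lambda>t::nat. c * q ^ t)"
  have q0: "q > 0" using sig1 q1 by linarith
  have bpos: "\<And>t. b t > 0" unfolding b_def using c0 q0 by simp
  define M where "M = (\<lambda>t. PiM {..<N} (\<lambda>i. laplace (b t)))"
  have P_eq: "noise_space N c q = PiM UNIV M" unfolding noise_space_def M_def b_def ..
  define f where "f = (\<lambda>t i (x::real). x + (if i = i0 then sh t else 0))"
  define g where "g = (\<lambda>t v. \<lambda>i\<in>{..<N}. f t i (v i))"
  define S where "S = (\<lambda>\<eta>. \<lambda>t\<in>(UNIV::nat set). g t (\<eta> t))"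
  define K where "K = exp (q / (c * (q + \<sigma> - 1)) * \<delta>)"
  have pL: "\<And>t. prob_space (laplace (b t))" using bpos by (rule prob_space_laplace)
  have ppsL: "\<And>t. product_prob_space (\<lambda>i. laplace (b t))" using pL by (intro product_prob_spaceI)
  have fm: "\<And>t i. f t i \<in> measurable (laplace (b t)) (laplace (b t))"
    unfolding f_def by (subst measurable_cong_sets[OF sets_laplace sets_laplace]) simp
  have gm: "\<And>t. g t \<in> measurable (M t) (M t)"
    unfolding g_def M_def by (rule product_prob_space.measurable_compose_PiM[OF ppsL fm])
  have distr_inner: "\<And>t. distr (M t) (M t) (g t) = PiM {..<N} (\<lambda>i. distr (laplace (b t)) (laplace (b t)) (f t i))"
    unfolding M_def g_def by (rule product_prob_space.distr_PiM_compose[OF ppsL fm])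
  have dom_inner: "domin (distr (M t) (M t) (g t)) (M t) (ennreal (exp (\<bar>sh t\<bar> / b t)))" for t
  proof -
    have "domin (PiM {..<N} (\<lambda>i. distr (laplace (b t)) (laplace (b t)) (f t i))) (PiM {..<N} (\<lambda>i. laplace (b t)))
      (\<Prod>i\<in>{..<N}. ennreal (exp (\<bar>if i = i0 then sh t else 0\<bar> / b t)))"
    proof (rule domin_PiM_finite[THEN mp])
      show "finite {..<N}" by simp
      show "\<forall>i\<in>{..<N}. prob_space (laplace (b t)) \<and> prob_space (distr (laplace (b t)) (laplace (b t)) (f t i)) \<and>
          domin (distr (laplace (b t)) (laplace (b t)) (f t i)) (laplace (b t)) (ennreal (exp (\<bar>if i = i0 then sh t else 0\<bar> / b t)))"
        using pL fm laplace_shift_domin[OF bpos] unfolding f_def by (auto intro: prob_space.prob_space_distr)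
    qed
    also have "(\<Prod>i\<in>{..<N}. ennreal (exp (\<bar>if i = i0 then sh t else 0\<bar> / b t))) =
        (\<Prod>i\<in>{..<N}. if i = i0 then ennreal (exp (\<bar>sh t\<bar> / b t)) else 1)"
      by (intro prod.cong) auto
    also have "\<dots> = ennreal (exp (\<bar>sh t\<bar> / b t))" using i0(1) by (simp add: prod.delta)
    finally have X: "domin (PiM {..<N} (\<lambda>i. distr (laplace (b t)) (laplace (b t)) (f t i))) (PiM {..<N} (\<lambda>i. laplace (b t)))
      (ennreal (exp (\<bar>sh t\<bar> / b t)))" .
    show ?thesis unfolding distr_inner[of t] unfolding M_def by (rule X)
  qed
  have pM: "\<And>t. prob_space (M t)" unfolding M_def using pL by (intro prob_space_PiM)
  have ppsM: "product_prob_space M" using pM by (intro product_prob_spaceI)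
  have S_eq: "S = (\<lambda>\<eta>. \<lambda>t\<in>UNIV. g t (\<eta> t))" unfolding S_def ..
  have S_meas: "S \<in> measurable (PiM UNIV M) (PiM UNIV M)"
    unfolding S_eq by (rule product_prob_space.measurable_compose_PiM[OF ppsM gm])
  have distr_outer: "distr (PiM UNIV M) (PiM UNIV M) S = PiM UNIV (\<lambda>t. distr (M t) (M t) (g t))"
    unfolding S_eq by (rule product_prob_space.distr_PiM_compose[OF ppsM gm])
  have bound: "(\<Prod>t\<in>J. ennreal (exp (\<bar>sh t\<bar> / b t))) \<le> ennreal K" if J: "finite J" for J
  proof -
    define r where "r = (1 - \<sigma>) / q"
    have r0: "0 \<le> r" "r < 1" unfolding r_def using sig1 q0 q1 by (auto simp: divide_less_eq)
    have a_eq: "\<bar>sh t\<bar> / b t = \<bar>d\<bar> / c * r ^ t" for t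
      unfolding sh_def b_def r_def using sig1 by (simp add: abs_mult power_divide)
    have sums: "(\<lambda>t. \<bar>d\<bar> / c * r ^ t) sums (\<bar>d\<bar> / c * (1 / (1 - r)))"
      using r0 by (intro sums_mult geometric_sums) simp
    have "(\<Sum>t\<in>J. \<bar>sh t\<bar> / b t) = (\<Sum>t\<in>J. \<bar>d\<bar> / c * r ^ t)" by (simp add: a_eq)
    also have "\<dots> \<le> (\<Sum>t. \<bar>d\<bar> / c * r ^ t)"
      using sums J r0 c0 by (intro sum_le_suminf) (auto simp: sums_iff)
    also have "\<dots> = \<bar>d\<bar> / c * (1 / (1 - r))" using sums by (simp add: sums_iff)
    also have "\<dots> = q / (c * (q + \<sigma> - 1)) * \<bar>d\<bar>"
      unfolding r_def using q0 q1 c0 by (simp add: field_simps)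
    also have "\<dots> \<le> q / (c * (q + \<sigma> - 1)) * \<delta>"
      using i0(2) q0 q1 c0 unfolding d_def by (intro mult_left_mono) auto
    finally have le: "(\<Sum>t\<in>J. \<bar>sh t\<bar> / b t) \<le> q / (c * (q + \<sigma> - 1)) * \<delta>" .
    have "(\<Prod>t\<in>J. ennreal (exp (\<bar>sh t\<bar> / b t))) = ennreal (\<Prod>t\<in>J. exp (\<bar>sh t\<bar> / b t))"
      by (simp add: prod_ennreal)
    also have "\<dots> = ennreal (exp (\<Sum>t\<in>J. \<bar>sh t\<bar> / b t))" by (simp add: exp_sum J)
    also have "\<dots> \<le> ennreal K" unfolding K_def using le by (intro ennreal_leI) simp
    finally show ?thesis .
  qed
  have domS: "domin (distr (PiM UNIV M) (PiM UNIV M) S) (PiM UNIV M) (ennreal K)"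
    unfolding distr_outer
    by (rule product_prob_space.domin_PiM_inf[OF ppsM _ dom_inner bound])
       (auto intro: prob_space.prob_space_distr pM gm)
  have obs_eq: "cs_obs N \<sigma> \<theta>' (S \<eta>) = cs_obs N \<sigma> \<theta> \<eta>" for \<eta>
  proof -
    have th: "\<And>j. j < N \<Longrightarrow> \<theta>' j = \<theta> j - (if j = i0 then d else 0)"
      using i0(3) unfolding d_def by auto
    have et: "\<And>t j. j < N \<Longrightarrow> S \<eta> t j = \<eta> t j + (if j = i0 then (1 - \<sigma>) ^ t * d else 0)"
      unfolding S_def g_def f_def sh_def by simp
    have cs: "\<And>t. (\<forall>j<N. cs_state N \<sigma> \<theta>' (S \<eta>) t j = cs_state N \<sigma> \<theta> \<eta> t j - (if j = i0 then (1 - \<sigma>) ^ t * d else 0))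
     \<and> cs_server N \<sigma> \<theta>' (S \<eta>) t = cs_server N \<sigma> \<theta> \<eta> t"
      using cs_shift[OF i0(1) th et] by blast
    show ?thesis unfolding cs_obs_def
    proof (rule ext)
      fix t
      have "(\<lambda>i\<in>{..<N}. cs_state N \<sigma> \<theta>' (S \<eta>) t i + S \<eta> t i) = (\<lambda>i\<in>{..<N}. cs_state N \<sigma> \<theta> \<eta> t i + \<eta> t i)"
        using cs[of t] et by (intro restrict_ext) auto
      then show "((\<lambda>i\<in>{..<N}. cs_state N \<sigma> \<theta>' (S \<eta>) t i + S \<eta> t i), cs_server N \<sigma> \<theta>' (S \<eta>) t) =
           ((\<lambda>i\<in>{..<N}. cs_state N \<sigma> \<theta> \<eta> t i + \<eta> t i), cs_server N \<sigma> \<theta> \<eta> t)"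
        using cs[of t] by (simp del: cs_server.simps)
    qed
  qed
  have comp: "(\<lambda>\<eta>. \<eta> t i) \<in> borel_measurable (PiM UNIV M)" if i: "i < N" for t i
  proof -
    have h1: "(\<lambda>\<eta>. \<eta> t) \<in> measurable (PiM UNIV M) (M t)" by (rule measurable_component_singleton) simp
    have h2: "(\<lambda>v. v i) \<in> measurable (M t) (laplace (b t))" unfolding M_def using i
      by (intro measurable_component_singleton) simp
    have "(\<lambda>\<eta>. \<eta> t i) \<in> measurable (PiM UNIV M) (laplace (b t))" using measurable_compose[OF h1 h2] by simp
    then show ?thesis by (subst (asm) measurable_cong_sets[OF refl sets_laplace])
  qed
  have obs_meas: "cs_obs N \<sigma> \<theta>0 \<in> measurable (PiM UNIV M) (obs_space N)" for \<theta>0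
  proof -
    have st: "\<And>t i. (\<lambda>\<eta>. cs_state N \<sigma> \<theta>0 \<eta> t i) \<in> borel_measurable (PiM UNIV M)"
      and sv: "\<And>t. (\<lambda>\<eta>. cs_server N \<sigma> \<theta>0 \<eta> t) \<in> borel_measurable (PiM UNIV M)"
      using cs_meas[of N "PiM UNIV M", OF comp] by blast+
    show ?thesis unfolding cs_obs_def obs_space_def
    proof (rule measurable_PiM_single')
      fix t :: nat
      have r: "(\<lambda>\<eta>. \<lambda>i\<in>{..<N}. cs_state N \<sigma> \<theta>0 \<eta> t i + \<eta> t i) \<in> measurable (PiM UNIV M) (PiM {..<N} (\<lambda>i. lborel))"
        using st comp by (intro measurable_restrict) (auto simp: measurable_lborel2)
      show "(\<lambda>\<eta>. ((\<lambda>i\<in>{..<N}. cs_state N \<sigma> \<theta>0 \<eta> t i + \<eta> t i), cs_server N \<sigma> \<theta>0 \<eta> t))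
          \<in> measurable (PiM UNIV M) (PiM {..<N} (\<lambda>i. lborel) \<Otimes>\<^sub>M lborel)"
        using r sv by (intro measurable_Pair) (auto simp: measurable_lborel2)
    qed (auto simp: space_pair_measure space_PiM PiE_def)
  qed
  define P where "P = PiM UNIV M"
  define B where "B = {\<eta> \<in> space P. cs_obs N \<sigma> \<theta>' \<eta> \<in> Obs}"
  have Bm: "B \<in> sets P"
  proof -
    have "cs_obs N \<sigma> \<theta>' -` Obs \<inter> space P \<in> sets P"
      unfolding P_def by (rule measurable_sets[OF obs_meas assms(9)])
    also have "cs_obs N \<sigma> \<theta>' -` Obs \<inter> space P = B" unfolding B_def by auto
    finally show ?thesis .
  qed
  have S_meas': "S \<in> measurable P P" using S_meas unfolding P_def .
  have A_eq: "{\<eta> \<in> space P. cs_obs N \<sigma> \<theta> \<eta> \<in> Obs} = S -` B \<inter> space P"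
  proof (rule set_eqI)
    fix \<eta>
    show "\<eta> \<in> {\<eta> \<in> space P. cs_obs N \<sigma> \<theta> \<eta> \<in> Obs} \<longleftrightarrow> \<eta> \<in> S -` B \<inter> space P"
      unfolding B_def using measurable_space[OF S_meas', of \<eta>] by (auto simp: obs_eq)
  qed
  interpret P: prob_space P unfolding P_def using pM by (intro prob_space_PiM)
  interpret D: prob_space "distr P P S" using S_meas' by (rule P.prob_space_distr)
  have "measure P {\<eta> \<in> space P. cs_obs N \<sigma> \<theta> \<eta> \<in> Obs} = measure (distr P P S) B"
    unfolding A_eq by (rule measure_distr[OF S_meas' Bm, symmetric])
  also have "\<dots> \<le> K * measure P B"
  proof -
    have "\<forall>A\<in>sets P. emeasure (distr P P S) A \<le> ennreal K * emeasure P A"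
      using domS unfolding domin_def P_def by (rule conjunct2)
    then have le: "emeasure (distr P P S) B \<le> ennreal K * emeasure P B" using Bm by (rule bspec)
    have e1: "emeasure (distr P P S) B = ennreal (measure (distr P P S) B)" by (rule D.emeasure_eq_measure)
    have e2: "emeasure P B = ennreal (measure P B)" by (rule P.emeasure_eq_measure)
    have Kp: "K \<ge> 0" unfolding K_def by simp
    have e3: "ennreal K * ennreal (measure P B) = ennreal (K * measure P B)"
      using Kp by (rule ennreal_mult[symmetric]) simp
    have "ennreal (measure (distr P P S) B) \<le> ennreal (K * measure P B)"
      using le unfolding e1 e2 e3 .
    moreover have "0 \<le> K * measure P B" using Kp by simp
    ultimately show ?thesis by (simp add: ennreal_le_iff)
  qed
  finally have X: "measure P {\<eta> \<in> space P. cs_obs N \<sigma> \<theta> \<eta> \<in> Obs} \<le> K * measure P B" .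
  show ?thesis using X unfolding P_eq P_def[symmetric] K_def B_def .
qed


end
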